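(* Let $D\ge 2$ and let $b_1<b_2<\dots<b_m$ be positive integers with $2\le b_{i+1}/b_i\le D$ for all $1\le i<m$. After $\mathcal{O}(m)$ preprocessing time, for any given integer $t$ one can locate $t$ in the sequence (i.e. find the index $i$ with $b_i\le t<b_{i+1}$, or report $t<b_1$ or $t\ge b_m$) in $\mathcal{O}(\log\log D)$ time.
   Context: Complexity is measured in a unit-cost RAM model in which arithmetic operations on the integers involved, including computing $\lfloor\log_2 x\rfloor$, take constant time. *)

theory Defs
  imports Complex_Main
begin

text \<open>Instruction operands that name registers are fixed (non-negative)
addresses; Load/Store provide indirect addressing. Every executed instruction
costs one time unit, including floor-log2.\<close>

type_synonym mem = "int \<Rightarrow> int"

datatype instr =
    Const nat int
  | Add nat nat nat
  | Sub nat nat nat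
  | Mul nat nat nat
  | Div nat nat nat        \<comment> \<open>M[r] := M[a] div M[b] (floor; x div 0 = 0)\<close>
  | Mod nat nat nat
  | Log2 nat nat
  | Load nat nat
  | Store nat nat
  | Jle nat nat nat
  | Halt

type_synonym prog = "instr list"

definition ilog2 :: "int \<Rightarrow> int" where
  "ilog2 x = (if x > 0 then \<lfloor>log 2 (real_of_int x)\<rfloor> else 0)"

fun exec_instr :: "instr \<Rightarrow> nat \<Rightarrow> mem \<Rightarrow> nat \<times> mem" where
  "exec_instr (Const r c) pc M = (Suc pc, M(int r := c))"
| "exec_instr (Add r a b) pc M = (Suc pc, M(int r := M (int a) + M (int b)))"
| "exec_instr (Sub r a b) pc M = (Suc pc, M(int r := M (int a) - M (int b)))"
| "exec_instr (Mul r a b) pc M = (Suc pc, M(int r := M (int a) * M (int b)))"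
| "exec_instr (Div r a b) pc M = (Suc pc, M(int r := M (int a) div M (int b)))"
| "exec_instr (Mod r a b) pc M = (Suc pc, M(int r := M (int a) mod M (int b)))"
| "exec_instr (Log2 r a) pc M = (Suc pc, M(int r := ilog2 (M (int a))))"
| "exec_instr (Load r a) pc M = (Suc pc, M(int r := M (M (int a))))"
| "exec_instr (Store a r) pc M = (Suc pc, M(M (int a) := M (int r)))"
| "exec_instr (Jle a b tgt) pc M = ((if M (int a) \<le> M (int b) then tgt else Suc pc), M)"
| "exec_instr Halt pc M = (pc, M)"

definition halted :: "prog \<Rightarrow> nat \<times> mem \<Rightarrow> bool" where
  "halted P c \<longleftrightarrow> fst c \<ge> length P \<or> P ! fst c = Halt"

definition step :: "prog \<Rightarrow> nat \<times> mem \<Rightarrow> nat \<times> mem" where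
  "step P c = (if halted P c then c else exec_instr (P ! fst c) (fst c) (snd c))"

definition conf :: "prog \<Rightarrow> mem \<Rightarrow> nat \<Rightarrow> nat \<times> mem" where
  "conf P M0 j = (step P ^^ j) (0, M0)"

text \<open>Program P, started on memory M0, halts after at most k steps with final
memory M1, and every memory cell at every intermediate configuration has
absolute value at most B (word-size restriction).\<close>
definition runs :: "prog \<Rightarrow> mem \<Rightarrow> nat \<Rightarrow> real \<Rightarrow> mem \<Rightarrow> bool" where
  "runs P M0 k B M1 \<longleftrightarrow>
     (\<exists>j\<le>k. halted P (conf P M0 j) \<and> snd (conf P M0 j) = M1 \<and>
        (\<forall>i\<le>j. \<forall>a. real_of_int \<bar>snd (conf P M0 i) a\<bar> \<le> B))"

definition input_mem :: "nat \<Rightarrow> (nat \<Rightarrow> int) \<Rightarrow> mem" where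
  "input_mem m b = (\<lambda>a. if a = 0 then int m
                       else if -int m \<le> a \<and> a \<le> -1 then b (nat (-a)) else 0)"

text \<open>Rank of t: the number of b_i (1 \<le> i \<le> m) with b_i \<le> t. Rank i with
1 \<le> i < m means b_i \<le> t < b_(i+1); rank 0 means t < b_1; rank m means t \<ge> b_m.\<close>
definition rank :: "nat \<Rightarrow> (nat \<Rightarrow> int) \<Rightarrow> int \<Rightarrow> nat" where
  "rank m b t = card {i \<in> {1..m}. b i \<le> t}"

end

theory Submission
  imports Defs
begin

definition bnd :: "real \<Rightarrow> mem \<Rightarrow> bool" where
  "bnd B M \<longleftrightarrow> (\<forall>a. real_of_int \<bar>M a\<bar> \<le> B)"

definition reach :: "prog \<Rightarrow> real \<Rightarrow> nat \<times> mem \<Rightarrow> nat \<Rightarrow> nat \<times> mem \<Rightarrow> bool" where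
  "reach P B c n c' \<longleftrightarrow> (step P ^^ n) c = c' \<and> (\<forall>i\<le>n. bnd B (snd ((step P ^^ i) c)))"

lemma bnd_upd[simp]: "bnd B M \<Longrightarrow> real_of_int \<bar>v\<bar> \<le> B \<Longrightarrow> bnd B (M(a := v))"
  by (auto simp: bnd_def)

lemma bndD: "bnd B M \<Longrightarrow> real_of_int \<bar>M a\<bar> \<le> B"
  by (auto simp: bnd_def)

lemma reach_0: "bnd B (snd c) \<Longrightarrow> reach P B c 0 c"
  by (auto simp: reach_def)

lemma reach_0': "bnd B M \<Longrightarrow> pc = pc' \<Longrightarrow> reach P B (pc, M) 0 (pc', M)"
  by (auto simp: reach_def)

lemma reach_bnd: "reach P B c n c' \<Longrightarrow> bnd B (snd c)"
  unfolding reach_def by (metis funpow_0 le0)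

lemma reach_bnd': "reach P B c n c' \<Longrightarrow> bnd B (snd c')"
  unfolding reach_def by blast

lemma reach_trans:
  assumes "reach P B c n1 c'" "reach P B c' n2 c''"
  shows "reach P B c (n1 + n2) c''"
  unfolding reach_def
proof (intro conjI allI impI)
  have "(step P ^^ (n1 + n2)) c = (step P ^^ n2) ((step P ^^ n1) c)"
    by (simp only: funpow_add[of n2 n1] add.commute[of n1 n2] comp_apply)
  then show "(step P ^^ (n1 + n2)) c = c''" using assms
    by (simp add: reach_def)
next
  fix i assume "i \<le> n1 + n2"
  show "bnd B (snd ((step P ^^ i) c))"
  proof (cases "i \<le> n1")
    case True then show ?thesis using assms(1) by (auto simp: reach_def)
  next
    case False
    define j where "j = i - n1"
    have j: "i = j + n1" "j \<le> n2" using False \<open>i \<le> n1 + n2\<close> unfolding j_def by simp_all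
    have "(step P ^^ i) c = (step P ^^ j) c'" using assms(1) j
      by (simp add: reach_def funpow_add)
    then show ?thesis using assms(2) j by (auto simp: reach_def)
  qed
qed

lemma reach_step:
  assumes "pc < length P" "P ! pc \<noteq> Halt" "bnd B M"
    "reach P B (exec_instr (P ! pc) pc M) n c'"
  shows "reach P B (pc, M) (Suc n) c'"
proof -
  have s: "step P (pc, M) = exec_instr (P ! pc) pc M"
    using assms by (simp add: step_def halted_def)
  have "reach P B (pc, M) 1 (exec_instr (P ! pc) pc M)"
    unfolding reach_def using assms(3) reach_bnd[OF assms(4)] s
    by (auto simp: le_Suc_eq)
  from reach_trans[OF this assms(4)] show ?thesis by simp
qed

lemma reach_stepI:
  "pc < length P \<Longrightarrow> P ! pc \<noteq> Halt \<Longrightarrow> bnd B M \<Longrightarrow>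
    reach P B (exec_instr (P ! pc) pc M) n c' \<Longrightarrow> reach P B (pc, M) (Suc n) c'"
  by (rule reach_step)

lemma reach_mono: "reach P B c n c' \<Longrightarrow> B \<le> B' \<Longrightarrow> reach P B' c n c'"
  unfolding reach_def bnd_def by (meson order_trans)

lemma runsI: "reach P B (0, M0) n (pc, M1) \<Longrightarrow> pc \<ge> length P \<Longrightarrow> n \<le> k \<Longrightarrow> runs P M0 k B M1"
  unfolding runs_def reach_def conf_def halted_def
  by (rule exI[of _ n]) (auto simp: bnd_def)

lemma il_nonneg: "1 \<le> x \<Longrightarrow> 0 \<le> ilog2 x"
  by (simp add: ilog2_def)

lemma il_mono: "0 < x \<Longrightarrow> x \<le> y \<Longrightarrow> ilog2 x \<le> ilog2 y"
  unfolding ilog2_def by (auto intro!: floor_mono)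

lemma il_lt_imp: "0 < x \<Longrightarrow> 0 < y \<Longrightarrow> ilog2 x < ilog2 y \<Longrightarrow> x < y"
  using il_mono[of y x] by force

lemma il_double: assumes "0 < x" "2 * x \<le> y" shows "ilog2 x + 1 \<le> ilog2 y"
proof -
  have "log 2 (real_of_int y) \<ge> log 2 (2 * real_of_int x)"
    using assms by simp
  also have "log 2 (2 * real_of_int x) = 1 + log 2 (real_of_int x)"
    using assms by (simp add: log_mult)
  finally have "\<lfloor>1 + log 2 (real_of_int x)\<rfloor> \<le> \<lfloor>log 2 (real_of_int y)\<rfloor>"
    by (intro floor_mono)
  then show ?thesis using assms unfolding ilog2_def by simp
qed

lemma il_ratio: assumes "0 < x" "0 < y" "real_of_int y \<le> D * real_of_int x"
  shows "real_of_int (ilog2 y) < real_of_int (ilog2 x) + log 2 D + 1"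
proof -
  have D: "D > 0" using assms by (smt (verit) mult_nonpos_nonneg of_int_pos)
  have "real_of_int (ilog2 y) \<le> log 2 (real_of_int y)" using assms unfolding ilog2_def by simp
  also have "\<dots> \<le> log 2 (D * real_of_int x)" using assms D by simp
  also have "\<dots> = log 2 D + log 2 (real_of_int x)" using assms D by (simp add: log_mult)
  also have "\<dots> < log 2 D + real_of_int (ilog2 x) + 1"
    using assms unfolding ilog2_def by (simp add: real_of_int_floor_add_one_gt)
  finally show ?thesis by simp
qed

lemma il_less_self: assumes "0 < x" shows "ilog2 x < x"
proof -
  obtain n where n: "x = int n" using assms by (metis zero_le_imp_eq_int less_imp_le)
  have "real n < 2 ^ n" using less_exp[of n] by (metis of_nat_less_iff of_nat_numeral of_nat_power)
  then have "real_of_int x < 2 powr real_of_int x" using n by (simp add: powr_realpow)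
  then have "log 2 (real_of_int x) < real_of_int x" using assms by (simp add: log_less_iff)
  then show ?thesis using assms unfolding ilog2_def by (simp add: floor_less_iff)
qed

locale S =
  fixes m :: nat and b :: "nat \<Rightarrow> int" and D :: real
  assumes D2: "D \<ge> 2" and m1: "m \<ge> 1" and pos: "\<forall>i\<in>{1..m}. b i > 0"
    and inc: "\<forall>i. 1 \<le> i \<and> i < m \<longrightarrow> b i < b (Suc i)"
    and rat: "\<forall>i. 1 \<le> i \<and> i < m \<longrightarrow>
          2 \<le> real_of_int (b (Suc i)) / real_of_int (b i) \<and>
          real_of_int (b (Suc i)) / real_of_int (b i) \<le> D"
begin

definition lg where "lg i = ilog2 (b i)"
definition L where "L = lg m - lg 1"
definition w where "w = L div int m + 1"
definition qf where "qf i = (lg i - lg 1) div w"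
definition cnt where "cnt x = card {k\<in>{1..m}. qf k \<le> x}"
definition Xp where "Xp = max 2 (max (int m) (b m))"

lemma bpos: "1 \<le> i \<Longrightarrow> i \<le> m \<Longrightarrow> 0 < b i" using pos by auto

lemma bstep: "1 \<le> i \<Longrightarrow> i < m \<Longrightarrow> 2 * b i \<le> b (Suc i)"
proof -
  assume a: "1 \<le> i" "i < m"
  then have "2 \<le> real_of_int (b (Suc i)) / real_of_int (b i)" using rat by auto
  moreover have "0 < b i" using a bpos by auto
  ultimately have "2 * real_of_int (b i) \<le> real_of_int (b (Suc i))" by (simp add: field_simps)
  then show ?thesis by linarith
qed

lemma bstepD: "1 \<le> i \<Longrightarrow> i < m \<Longrightarrow> real_of_int (b (Suc i)) \<le> D * real_of_int (b i)"
proof -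
  assume a: "1 \<le> i" "i < m"
  then have "real_of_int (b (Suc i)) / real_of_int (b i) \<le> D" using rat by auto
  moreover have "0 < b i" using a bpos by auto
  ultimately show ?thesis by (simp add: field_simps)
qed

lemma bmono_lt: "1 \<le> i \<Longrightarrow> i < j \<Longrightarrow> j \<le> m \<Longrightarrow> b i < b j"
proof (induction j)
  case 0 then show ?case by simp
next
  case (Suc j)
  have "1 \<le> j \<and> j < m" using Suc.prems by linarith
  then have bj: "b j < b (Suc j)" using inc by blast
  show ?case
  proof (cases "i < j")
    case True
    then have "b i < b j" using Suc.IH Suc.prems by simp
    then show ?thesis using bj by simp
  next
    case False
    then have "i = j" using Suc.prems by simp
    then show ?thesis using bj by simp
  qed
qed

lemma bmono: "1 \<le> i \<Longrightarrow> i \<le> j \<Longrightarrow> j \<le> m \<Longrightarrow> b i \<le> b j"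
  using bmono_lt[of i j] by (cases "i = j") auto

lemma lg_step: "1 \<le> i \<Longrightarrow> i < m \<Longrightarrow> lg i + 1 \<le> lg (Suc i)"
  unfolding lg_def by (rule il_double[OF bpos bstep]) simp_all

lemma lg_stepD: "1 \<le> i \<Longrightarrow> i < m \<Longrightarrow> real_of_int (lg (Suc i)) < real_of_int (lg i) + log 2 D + 1"
  unfolding lg_def by (rule il_ratio[OF bpos bpos bstepD]) simp_all

lemma lg_inc: "1 \<le> i \<Longrightarrow> i \<le> j \<Longrightarrow> j \<le> m \<Longrightarrow> lg i + int (j - i) \<le> lg j"
proof (induction j)
  case 0 then show ?case by simp
next
  case (Suc j)
  show ?case
  proof (cases "i = Suc j")
    case True then show ?thesis by simp
  next
    case False
    then have ij: "i \<le> j" using Suc.prems by simp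
    then have "lg i + int (j - i) \<le> lg j" using Suc.IH Suc.prems by simp
    moreover have "lg j + 1 \<le> lg (Suc j)" using lg_step[of j] Suc.prems ij by simp
    moreover have "int (Suc j - i) = int (j - i) + 1" using ij by simp
    ultimately show ?thesis by linarith
  qed
qed

lemma lg_up0: "Suc k \<le> m \<Longrightarrow> real_of_int (lg (Suc k)) \<le> real_of_int (lg 1) + real k * (log 2 D + 1)"
proof (induction k)
  case 0 then show ?case by simp
next
  case (Suc k)
  have j1: "1 \<le> Suc k" "Suc k < m" using Suc.prems by auto
  have a: "real_of_int (lg (Suc k)) \<le> real_of_int (lg 1) + real k * (log 2 D + 1)"
    by (rule Suc.IH) (use j1 in auto)
  have b: "real_of_int (lg (Suc (Suc k))) < real_of_int (lg (Suc k)) + log 2 D + 1" by (rule lg_stepD[OF j1])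
  have c: "real (Suc k) * (log 2 D + 1) = real k * (log 2 D + 1) + (log 2 D + 1)"
    by (simp only: of_nat_Suc distrib_right mult_1_left)
  show ?case unfolding c using a b by linarith
qed

lemma lg_up: "1 \<le> j \<Longrightarrow> j \<le> m \<Longrightarrow> real_of_int (lg j) \<le> real_of_int (lg 1) + real (j - 1) * (log 2 D + 1)"
  using lg_up0[of "j - 1"] by simp

lemma logD: "1 \<le> log 2 D" using D2 by simp

lemma lg1_nonneg: "0 \<le> lg i" if "1 \<le> i" "i \<le> m"
  unfolding lg_def using bpos[OF that] il_nonneg by simp

lemma L_nonneg: "0 \<le> L" unfolding L_def using lg_inc[of 1 m] m1 by simp

lemma w_pos: "1 \<le> w" unfolding w_def using L_nonneg m1 by (simp add: div_int_pos_iff)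

lemma L_lt: "L < int m * w"
proof -
  have e: "L = int m * (L div int m) + L mod int m" by simp
  have "L mod int m < int m" using m1 by simp
  then have "int m * (L div int m) + L mod int m < int m * (L div int m) + int m" by linarith
  moreover have "int m * (L div int m + 1) = int m * (L div int m) + int m" by (simp add: distrib_left)
  ultimately show ?thesis unfolding w_def using e by linarith
qed

lemma w_le: "real_of_int w \<le> log 2 D + 2"
proof -
  have "real_of_int L \<le> real (m - 1) * (log 2 D + 1)" using lg_up[of m] m1 unfolding L_def by simp
  also have "\<dots> \<le> real m * (log 2 D + 1)" using logD by (intro mult_right_mono) auto
  finally have "real_of_int L \<le> real m * (log 2 D + 1)" .
  moreover have "real_of_int (L div int m) * real m \<le> real_of_int L"
  proof -
    have "0 \<le> L mod int m" using m1 by simp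
    moreover have "L div int m * int m + L mod int m = L" by (rule div_mult_mod_eq)
    ultimately have "(L div int m) * int m \<le> L" by linarith 
    then show ?thesis by (metis of_int_le_iff of_int_mult of_int_of_nat_eq)
  qed
  ultimately have "real_of_int (L div int m) * real m \<le> real m * (log 2 D + 1)" by linarith
  then have "real_of_int (L div int m) \<le> log 2 D + 1" using m1 by (simp add: mult.commute)
  then show ?thesis unfolding w_def by simp
qed


lemma div_lower: "0 < (w::int) \<Longrightarrow> (y div w) * w \<le> y"
proof -
  assume "0 < w"
  then have "0 \<le> y mod w" by simp
  moreover have "y div w * w + y mod w = y" by (rule div_mult_mod_eq)
  ultimately show ?thesis by linarith
qed

lemma div_upper: "0 < (w::int) \<Longrightarrow> y < (y div w + 1) * w"
proof -
  assume "0 < w"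
  then have "y mod w < w" by simp
  moreover have "y div w * w + y mod w = y" by (rule div_mult_mod_eq)
  moreover have "(y div w + 1) * w = y div w * w + w" by (simp add: distrib_right)
  ultimately show ?thesis by linarith
qed

lemma wpos': "0 < w" using w_pos by simp

lemma qf_mono: "1 \<le> i \<Longrightarrow> i \<le> j \<Longrightarrow> j \<le> m \<Longrightarrow> qf i \<le> qf j"
  unfolding qf_def using lg_inc[of i j] wpos' by (intro zdiv_mono1) auto

lemma qf_nonneg: "1 \<le> i \<Longrightarrow> i \<le> m \<Longrightarrow> 0 \<le> qf i"
  unfolding qf_def using lg_inc[of 1 i] wpos' by (simp add: pos_imp_zdiv_nonneg_iff)

lemma qf_1: "qf 1 = 0" unfolding qf_def by simp

lemma qfm_lt: "qf m < int m"
proof -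
  have "qf m * w \<le> L" unfolding qf_def L_def using div_lower[OF wpos'] by simp
  then have "qf m * w < int m * w" using L_lt by linarith
  then show ?thesis using wpos' by (simp add: mult_less_cancel_right)
qed

lemma qf_lt: "1 \<le> i \<Longrightarrow> i \<le> m \<Longrightarrow> qf i < int m"
  using qf_mono[of i m] qfm_lt by simp

lemma prefix_set:
  assumes "A \<subseteq> {1..(n::nat)}" "\<And>k j. k \<in> A \<Longrightarrow> 1 \<le> j \<Longrightarrow> j \<le> k \<Longrightarrow> j \<in> A"
  shows "A = {1..card A}"
proof (cases "A = {}")
  case True then show ?thesis by simp
next
  case False
  have fin: "finite A" using assms(1) finite_subset by blast
  define p where "p = Max A"
  have pS: "p \<in> A" using Max_in[OF fin False] p_def by simp
  have "A = {1..p}"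
  proof
    show "A \<subseteq> {1..p}" using assms(1) Max_ge[OF fin] p_def by fastforce
    show "{1..p} \<subseteq> A" using assms(2)[OF pS] by auto
  qed
  then show ?thesis by simp
qed

lemma cnt_set: "{k\<in>{1..m}. qf k \<le> x} = {1..cnt x}"
  unfolding cnt_def
proof (rule prefix_set[of _ m])
  show "{k \<in> {1..m}. qf k \<le> x} \<subseteq> {1..m}" by auto
  fix k j assume "k \<in> {k \<in> {1..m}. qf k \<le> x}" "1 \<le> j" "j \<le> k"
  then show "j \<in> {k \<in> {1..m}. qf k \<le> x}" using qf_mono[of j k] by auto
qed

lemma cnt_char: "1 \<le> k \<Longrightarrow> k \<le> m \<Longrightarrow> (k \<le> cnt x \<longleftrightarrow> qf k \<le> x)"
  using cnt_set[of x] by (metis (no_types, lifting) atLeastAtMost_iff mem_Collect_eq)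

lemma cnt_le: "cnt x \<le> m"
  unfolding cnt_def by (rule order_trans[OF card_mono[of "{1..m}"]]) auto

lemma cnt_neg: "x < 0 \<Longrightarrow> cnt x = 0"
  unfolding cnt_def using qf_nonneg by (force intro: card.empty)

lemma cnt_top: "int m - 1 \<le> x \<Longrightarrow> cnt x = m"
proof -
  assume "int m - 1 \<le> x"
  then have "{k\<in>{1..m}. qf k \<le> x} = {1..m}" using qf_lt by force
  then show ?thesis unfolding cnt_def by simp
qed

lemma cnt_pos: "0 \<le> x \<Longrightarrow> 1 \<le> cnt x"
  using cnt_char[of 1 x] qf_1 m1 by simp

lemma bucket: "int (cnt x) - int (cnt (x - 1)) \<le> w"
proof (cases "cnt x \<le> cnt (x - 1)")
  case True then show ?thesis using w_pos by linarith
next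
  case False
  define a where "a = Suc (cnt (x - 1))"
  define h where "h = cnt x"
  have ah: "a \<le> h" "1 \<le> a" "h \<le> m" using False cnt_le unfolding a_def h_def by auto
  have qa: "\<not> qf a \<le> x - 1" using cnt_char[of a "x - 1"] ah unfolding a_def by auto
  have qh: "qf h \<le> x" using cnt_char[of h x] ah unfolding h_def by auto
  have "qf a \<le> qf h" using qf_mono ah by auto
  then have qa': "qf a = x" "qf h = x" using qa qh by auto
  have "lg a + int (h - a) \<le> lg h" using lg_inc ah by auto
  moreover have "x * w \<le> lg a - lg 1" using div_lower[OF wpos', of "lg a - lg 1"] qa' unfolding qf_def by simp
  moreover have "lg h - lg 1 < (x + 1) * w" using div_upper[OF wpos', of "lg h - lg 1"] qa' unfolding qf_def by simp
  moreover have "(x + 1) * w = x * w + w" by (simp add: distrib_right)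
  ultimately have "int (h - a) < w" by linarith
  then show ?thesis unfolding a_def h_def using ah unfolding a_def h_def by linarith
qed

lemma rank_char:
  assumes "r \<le> m" "\<And>k. 1 \<le> k \<Longrightarrow> k \<le> m \<Longrightarrow> (b k \<le> t \<longleftrightarrow> k \<le> r)"
  shows "rank m b t = r"
proof -
  have "{i \<in> {1..m}. b i \<le> t} = {1..r}" using assms by auto
  then show ?thesis unfolding rank_def by simp
qed

lemma query_lo:
  assumes "b 1 \<le> t" "1 \<le> k" "k \<le> m" "k \<le> cnt ((ilog2 t - lg 1) div w - 1)"
  shows "b k \<le> t"
proof -
  have t: "0 < t" using assms bpos[of 1] m1 by simp
  have "qf k \<le> (ilog2 t - lg 1) div w - 1" using cnt_char[OF assms(2,3)] assms(4) by blast
  then have "lg k < ilog2 t"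
    using zdiv_mono1[of "ilog2 t - lg 1" "lg k - lg 1" w] wpos' unfolding qf_def by force
  then show ?thesis using il_lt_imp[of "b k" t] bpos assms t unfolding lg_def by force
qed

lemma query_hi:
  assumes "b 1 \<le> t" "1 \<le> k" "k \<le> m" "cnt ((ilog2 t - lg 1) div w) < k"
  shows "t < b k"
proof -
  have t: "0 < t" using assms bpos[of 1] m1 by simp
  have "\<not> qf k \<le> (ilog2 t - lg 1) div w" using cnt_char[OF assms(2,3), of "(ilog2 t - lg 1) div w"] assms(4) by linarith
  then have "ilog2 t < lg k"
    using zdiv_mono1[of "lg k - lg 1" "ilog2 t - lg 1" w] wpos' unfolding qf_def by force
  then show ?thesis using il_lt_imp[of t "b k"] bpos assms t unfolding lg_def by force
qed

lemma query_q:
  assumes "b 1 \<le> t" "t < b m"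
  shows "0 \<le> (ilog2 t - lg 1) div w" "(ilog2 t - lg 1) div w < int m"
proof -
  have "lg 1 \<le> ilog2 t" unfolding lg_def using il_mono bpos[of 1] m1 assms by simp
  then show "0 \<le> (ilog2 t - lg 1) div w" using wpos' by (simp add: pos_imp_zdiv_nonneg_iff)
  have "ilog2 t \<le> lg m" unfolding lg_def using il_mono[of t "b m"] bpos[of 1] m1 assms by simp
  then have "(ilog2 t - lg 1) div w \<le> qf m" unfolding qf_def using wpos' by (intro zdiv_mono1) auto
  then show "(ilog2 t - lg 1) div w < int m" using qfm_lt by simp
qed

end

definition Pre :: prog where "Pre = [
 Const 4 1, Add 1 0 8, Sub 6 8 4, Load 7 6, Log2 2 7, Sub 6 8 1, Load 7 6, Log2 7 7,
 Sub 7 7 2, Div 3 7 1, Add 3 3 4, Const 9 101, Const 10 100, Const 5 1,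
 Jle 5 1 16, Jle 8 8 25, Sub 6 8 5, Load 7 6, Log2 7 7, Sub 7 7 2, Div 7 7 3, Add 7 7 9,
 Store 7 5, Add 5 5 4, Jle 8 8 14,
 Const 5 2, Jle 5 1 28, Jle 8 8 37, Add 6 5 10, Load 7 6, Jle 7 8 32, Jle 8 8 35,
 Sub 11 6 4, Load 7 11, Store 6 7, Add 5 5 4, Jle 8 8 26]"

locale SB = S +
  fixes B :: real
  assumes Bbig: "103 * real_of_int Xp \<le> B"
begin

lemma Xp2: "2 \<le> Xp" unfolding Xp_def by simp
lemma mXp: "int m \<le> Xp" unfolding Xp_def by simp
lemma bXp: "1 \<le> k \<Longrightarrow> k \<le> m \<Longrightarrow> b k \<le> Xp" using bmono[of k m] unfolding Xp_def by simp
lemma lgXp: "1 \<le> k \<Longrightarrow> k \<le> m \<Longrightarrow> lg k < Xp" using bXp[of k] il_less_self[OF bpos[of k]] unfolding lg_def by simp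

lemma BB: "\<bar>v\<bar> \<le> 103 * Xp \<Longrightarrow> real_of_int \<bar>v\<bar> \<le> B"
proof -
  assume "\<bar>v\<bar> \<le> 103 * Xp"
  then have "real_of_int \<bar>v\<bar> \<le> 103 * real_of_int Xp" by (metis of_int_le_iff of_int_mult of_int_numeral)
  then show ?thesis using Bbig by linarith
qed

lemma bnd_updB: "bnd B M \<Longrightarrow> \<bar>v\<bar> \<le> 101 + 2 * Xp \<Longrightarrow> bnd B (M(a := v))"
proof -
  assume a: "bnd B M" "\<bar>v\<bar> \<le> 101 + 2 * Xp"
  have "\<bar>v\<bar> \<le> 103 * Xp" using a(2) Xp2 by linarith
  then show ?thesis using BB bnd_upd a(1) by blast
qed

lemma bnd_in: "bnd B (input_mem m b)"
  unfolding bnd_def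
proof
  fix a
  show "real_of_int \<bar>input_mem m b a\<bar> \<le> B"
  proof (rule BB)
    show "\<bar>input_mem m b a\<bar> \<le> 103 * Xp"
    proof (cases "a = 0 \<or> \<not> (- int m \<le> a \<and> a \<le> - 1)")
      case True then show ?thesis using mXp Xp2 unfolding input_mem_def by auto
    next
      case False
      then have "1 \<le> nat (-a)" "nat (-a) \<le> m" by auto
      then show ?thesis using False bXp[of "nat (-a)"] bpos[of "nat (-a)"] Xp2 unfolding input_mem_def by auto
    qed
  qed
qed

lemma im_0: "input_mem m b 0 = int m" by (simp add: input_mem_def)
lemma im_pos: "0 < a \<Longrightarrow> input_mem m b a = 0" by (simp add: input_mem_def)
lemma im_1: "input_mem m b (-1) = b 1" using m1 by (simp add: input_mem_def)
lemma im_m: "input_mem m b (- int m) = b m" using m1 by (simp add: input_mem_def)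

lemma lg1_b: "0 \<le> lg 1" "lg 1 < Xp" using lg1_nonneg[of 1] lgXp[of 1] m1 by auto
lemma lgm_b: "0 \<le> lg m" "lg m < Xp" using lg1_nonneg[of m] lgXp[of m] m1 by auto

lemma b1_b: "b 1 \<le> Xp" "0 < b 1" using bXp[of 1] bpos[of 1] m1 by auto
lemma bm_b: "b m \<le> Xp" "0 < b m" using bXp[of m] bpos[of m] m1 by auto
lemma Ldiv_b: "0 \<le> (lg m - lg 1) div int m" "(lg m - lg 1) div int m \<le> lg m - lg 1"
  using L_nonneg m1 zdiv_mono2[of L 1 "int m"] unfolding L_def by (simp_all add: pos_imp_zdiv_nonneg_iff)
lemmas VF = Xp2 mXp b1_b bm_b lg1_b lgm_b m1 lg_def[symmetric] Ldiv_b

definition T1 where "T1 i x = (if \<exists>k\<in>{1..<i}. qf k = x then int (card {k\<in>{1..<i}. qf k \<le> x}) else 0)"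

definition Inv1 where "Inv1 i M \<longleftrightarrow> 1 \<le> i \<and> i \<le> m + 1 \<and> bnd B M \<and> M 1 = int m \<and> M 2 = lg 1 \<and> M 3 = w
  \<and> M 4 = 1 \<and> M 5 = int i \<and> M 8 = 0 \<and> M 9 = 101 \<and> M 10 = 100 \<and> (\<forall>a<0. M a = input_mem m b a)
  \<and> M 100 = 0 \<and> (\<forall>x. 0 \<le> x \<longrightarrow> x < int m \<longrightarrow> M (101 + x) = T1 i x)"

lemma pre_init: "\<exists>n M'. reach Pre B (0, input_mem m b) n (14, M') \<and> n \<le> 14 \<and> Inv1 1 M'"
  apply (insert VF)
  apply (rule exI, rule exI, rule conjI)
  apply (rule reach_stepI)
     apply (simp add: Pre_def)
    apply (simp add: Pre_def)
   apply (simp add: bnd_in bnd_updB del: bnd_upd)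
  apply (simp add: Pre_def im_0 im_pos im_1 im_m)
  apply (rule reach_stepI)
     apply (simp add: Pre_def)
    apply (simp add: Pre_def)
   apply (simp add: bnd_in bnd_updB del: bnd_upd)
  apply (simp add: Pre_def im_0 im_pos im_1 im_m)
  apply (rule reach_stepI)
     apply (simp add: Pre_def)
    apply (simp add: Pre_def)
   apply (simp add: bnd_in bnd_updB del: bnd_upd)
  apply (simp add: Pre_def im_0 im_pos im_1 im_m)
  apply (rule reach_stepI)
     apply (simp add: Pre_def)
    apply (simp add: Pre_def)
   apply (simp add: bnd_in bnd_updB del: bnd_upd)
  apply (simp add: Pre_def im_0 im_pos im_1 im_m)
  apply (rule reach_stepI)
     apply (simp add: Pre_def)
    apply (simp add: Pre_def)
   apply (simp add: bnd_in bnd_updB del: bnd_upd)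
  apply (simp add: Pre_def im_0 im_pos im_1 im_m)
  apply (rule reach_stepI)
     apply (simp add: Pre_def)
    apply (simp add: Pre_def)
   apply (simp add: bnd_in bnd_updB del: bnd_upd)
  apply (simp add: Pre_def im_0 im_pos im_1 im_m)
  apply (rule reach_stepI)
     apply (simp add: Pre_def)
    apply (simp add: Pre_def)
   apply (simp add: bnd_in bnd_updB del: bnd_upd)
  apply (simp add: Pre_def im_0 im_pos im_1 im_m)
  apply (rule reach_stepI)
     apply (simp add: Pre_def)
    apply (simp add: Pre_def)
   apply (simp add: bnd_in bnd_updB del: bnd_upd)
  apply (simp add: Pre_def im_0 im_pos im_1 im_m)
  apply (rule reach_stepI)
     apply (simp add: Pre_def)
    apply (simp add: Pre_def)
   apply (simp add: bnd_in bnd_updB del: bnd_upd)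
  apply (simp add: Pre_def im_0 im_pos im_1 im_m)
  apply (rule reach_stepI)
     apply (simp add: Pre_def)
    apply (simp add: Pre_def)
   apply (simp add: bnd_in bnd_updB del: bnd_upd)
  apply (simp add: Pre_def im_0 im_pos im_1 im_m)
  apply (rule reach_stepI)
     apply (simp add: Pre_def)
    apply (simp add: Pre_def)
   apply (simp add: bnd_in bnd_updB del: bnd_upd)
  apply (simp add: Pre_def im_0 im_pos im_1 im_m)
  apply (rule reach_stepI)
     apply (simp add: Pre_def)
    apply (simp add: Pre_def)
   apply (simp add: bnd_in bnd_updB del: bnd_upd)
  apply (simp add: Pre_def im_0 im_pos im_1 im_m)
  apply (rule reach_stepI)
     apply (simp add: Pre_def)
    apply (simp add: Pre_def)
   apply (simp add: bnd_in bnd_updB del: bnd_upd)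
  apply (simp add: Pre_def im_0 im_pos im_1 im_m)
  apply (rule reach_stepI)
     apply (simp add: Pre_def)
    apply (simp add: Pre_def)
   apply (simp add: bnd_in bnd_updB del: bnd_upd)
  apply (simp add: Pre_def im_0 im_pos im_1 im_m)
  apply (rule reach_0')
   apply (simp add: bnd_in bnd_updB del: bnd_upd)
  apply simp
  apply (simp add: Inv1_def T1_def w_def L_def bnd_in bnd_updB im_pos del: bnd_upd)
  done


lemma im_k: "1 \<le> k \<Longrightarrow> k \<le> m \<Longrightarrow> input_mem m b (- int k) = b k"
  by (simp add: input_mem_def)

lemma T1_step: assumes "1 \<le> i" "i \<le> m" shows "T1 (Suc i) x = (if x = qf i then int i else T1 i x)"
proof (cases "x = qf i")
  case True
  have "{k\<in>{1..<Suc i}. qf k \<le> x} = {1..<Suc i}" using True qf_mono assms by auto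
  then show ?thesis using True assms unfolding T1_def by auto
next
  case False
  have e: "(\<exists>k\<in>{1..<Suc i}. qf k = x) = (\<exists>k\<in>{1..<i}. qf k = x)" using False by (auto simp: less_Suc_eq)
  show ?thesis
  proof (cases "\<exists>k\<in>{1..<i}. qf k = x")
    case True
    then obtain k where k: "k \<in> {1..<i}" "qf k = x" by blast
    then have "x < qf i" using qf_mono[of k i] assms False by auto
    then have "{k\<in>{1..<Suc i}. qf k \<le> x} = {k\<in>{1..<i}. qf k \<le> x}" by (auto simp: less_Suc_eq)
    then show ?thesis using e False unfolding T1_def by simp
  next
    case False
    then show ?thesis using e \<open>x \<noteq> qf i\<close> unfolding T1_def by simp
  qed
qed

lemma loop1_body:
  assumes inv: "Inv1 i M" and im: "i \<le> m"
  shows "\<exists>n M'. reach Pre B (14, M) n (14, M') \<and> n \<le> 10 \<and> Inv1 (Suc i) M'"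
proof -
  have i1: "1 \<le> i" and bM: "bnd B M" and r: "M 1 = int m" "M 2 = lg 1" "M 3 = w" "M 4 = 1" "M 5 = int i" "M 8 = 0" "M 9 = 101"
    "M 10 = 100" "\<forall>a<0. M a = input_mem m b a" "M 100 = 0" and tab: "\<forall>x. 0 \<le> x \<longrightarrow> x < int m \<longrightarrow> M (101 + x) = T1 i x"
    using inv unfolding Inv1_def by auto
  have bi: "b i \<le> Xp" "0 < b i" "0 \<le> lg i" "lg i < Xp" using bXp[OF i1 im] bpos[OF i1 im] lg1_nonneg[OF i1 im] lgXp[OF i1 im] by auto
  have qi: "0 \<le> qf i" "qf i < int m" using qf_nonneg[OF i1 im] qf_lt[OF i1 im] by auto
  have qd: "\<And>k. (lg k - lg 1) div w = qf k" unfolding qf_def by simp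
  have ind: "int i \<le> int m" using im by simp
  show ?thesis
  apply (insert VF bi qi qd i1 im ind bM r)
  apply (rule exI, rule exI, rule conjI)
  apply (rule reach_stepI)
     apply (simp add: Pre_def)
    apply (simp add: Pre_def)
   apply (simp add: bnd_updB del: bnd_upd)
  apply (simp add: Pre_def im_k)
  apply (rule reach_stepI)
     apply (simp add: Pre_def)
    apply (simp add: Pre_def)
   apply (simp add: bnd_updB del: bnd_upd)
  apply (simp add: Pre_def im_k)
  apply (rule reach_stepI)
     apply (simp add: Pre_def)
    apply (simp add: Pre_def)
   apply (simp add: bnd_updB del: bnd_upd)
  apply (simp add: Pre_def im_k)
  apply (rule reach_stepI)
     apply (simp add: Pre_def)
    apply (simp add: Pre_def)
   apply (simp add: bnd_updB del: bnd_upd)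
  apply (simp add: Pre_def im_k)
  apply (rule reach_stepI)
     apply (simp add: Pre_def)
    apply (simp add: Pre_def)
   apply (simp add: bnd_updB del: bnd_upd)
  apply (simp add: Pre_def im_k)
  apply (rule reach_stepI)
     apply (simp add: Pre_def)
    apply (simp add: Pre_def)
   apply (simp add: bnd_updB del: bnd_upd)
  apply (simp add: Pre_def im_k)
  apply (rule reach_stepI)
     apply (simp add: Pre_def)
    apply (simp add: Pre_def)
   apply (simp add: bnd_updB del: bnd_upd)
  apply (simp add: Pre_def im_k)
  apply (rule reach_stepI)
     apply (simp add: Pre_def)
    apply (simp add: Pre_def)
   apply (simp add: bnd_updB del: bnd_upd)
  apply (simp add: Pre_def im_k)
  apply (rule reach_stepI)
     apply (simp add: Pre_def)
    apply (simp add: Pre_def)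
   apply (simp add: bnd_updB del: bnd_upd)
  apply (simp add: Pre_def im_k)
  apply (rule reach_stepI)
     apply (simp add: Pre_def)
    apply (simp add: Pre_def)
   apply (simp add: bnd_updB del: bnd_upd)
  apply (simp add: Pre_def im_k)
  apply (rule reach_0')
   apply (simp add: bnd_updB del: bnd_upd)
  apply simp
  apply (insert tab)
  apply (simp add: Inv1_def bnd_updB T1_step del: bnd_upd)
  done
qed


lemma loop1:
  shows "Inv1 i M \<Longrightarrow> \<exists>n M'. reach Pre B (14, M) n (14, M') \<and> n \<le> 10 * (m + 1 - i) \<and> Inv1 (m + 1) M'"
proof (induction "m + 1 - i" arbitrary: i M)
  case 0
  then have "i = m + 1" "bnd B M" unfolding Inv1_def by auto
  then show ?case using 0 by (intro exI[of _ 0] exI[of _ M]) (auto intro: reach_0')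
next
  case (Suc k)
  then have im: "i \<le> m" unfolding Inv1_def by auto
  obtain n1 M1 where 1: "reach Pre B (14, M) n1 (14, M1)" "n1 \<le> 10" "Inv1 (Suc i) M1"
    using loop1_body[OF Suc.prems im] by blast
  have "k = m + 1 - Suc i" using Suc.hyps by simp
  from Suc.hyps(1)[OF this 1(3)] obtain n2 M2 where
    2: "reach Pre B (14, M1) n2 (14, M2)" "n2 \<le> 10 * (m + 1 - Suc i)" "Inv1 (m + 1) M2" by blast
  have "n1 + n2 \<le> 10 * (m + 1 - i)" using 1(2) 2(2) im by simp
  then show ?case using reach_trans[OF 1(1) 2(1)] 2(3) by blast
qed

lemma T1_fin: "T1 (Suc m) x = (if \<exists>k\<in>{1..m}. qf k = x then int (cnt x) else 0)"
  by (simp add: T1_def cnt_def atLeastLessThanSuc_atLeastAtMost)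

definition V where "V j x = (if x + 2 \<le> int j then int (cnt x) else T1 (Suc m) x)"

definition Inv2 where "Inv2 j M \<longleftrightarrow> 2 \<le> j \<and> j \<le> m + 1 \<and> bnd B M \<and> M 1 = int m \<and> M 2 = lg 1 \<and> M 3 = w
  \<and> M 4 = 1 \<and> M 5 = int j \<and> M 8 = 0 \<and> M 9 = 101 \<and> M 10 = 100 \<and> (\<forall>a<0. M a = input_mem m b a)
  \<and> (\<forall>a. 100 \<le> a \<longrightarrow> a \<le> 100 + int m \<longrightarrow> M a = V j (a - 101))"

lemma cnt_b: "0 \<le> int (cnt x)" "int (cnt x) \<le> int m" using cnt_le[of x] by auto

lemma loop1_exit:
  assumes inv: "Inv1 (Suc m) M"
  shows "\<exists>n M'. reach Pre B (14, M) n (26, M') \<and> n \<le> 3 \<and> Inv2 2 M'"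
proof -
  have bM: "bnd B M" and r: "M 1 = int m" "M 2 = lg 1" "M 3 = w" "M 4 = 1" "M 5 = int (Suc m)" "M 8 = 0" "M 9 = 101"
    "M 10 = 100" "\<forall>a<0. M a = input_mem m b a" "M 100 = 0" and tab: "\<forall>x. 0 \<le> x \<longrightarrow> x < int m \<longrightarrow> M (101 + x) = T1 (Suc m) x"
    using inv unfolding Inv1_def by auto
  have tab2: "\<forall>a. 100 \<le> a \<longrightarrow> a \<le> 100 + int m \<longrightarrow> M a = V 2 (a - 101)"
  proof (intro allI impI)
    fix a :: int assume a: "100 \<le> a" "a \<le> 100 + int m"
    show "M a = V 2 (a - 101)"
    proof (cases "a = 100")
      case True then show ?thesis using r(10) cnt_neg[of "-1"] unfolding V_def by simp
    next
      case False
      then have "M a = T1 (Suc m) (a - 101)" using tab[rule_format, of "a - 101"] a by simp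
      moreover have "T1 (Suc m) 0 = int (cnt 0)" using T1_fin[of 0] qf_1 m1 by force
      moreover have "a - 101 + 2 \<le> int 2 \<Longrightarrow> a = 101" using False a by simp
      ultimately show ?thesis unfolding V_def by auto
    qed
  qed
  show ?thesis
  apply (insert VF bM r)
  apply (rule exI, rule exI, rule conjI)
  apply (rule reach_stepI)
     apply (simp add: Pre_def)
    apply (simp add: Pre_def)
   apply (simp add: bnd_updB del: bnd_upd)
  apply (simp add: Pre_def )
  apply (rule reach_stepI)
     apply (simp add: Pre_def)
    apply (simp add: Pre_def)
   apply (simp add: bnd_updB del: bnd_upd)
  apply (simp add: Pre_def )
  apply (rule reach_stepI)
     apply (simp add: Pre_def)
    apply (simp add: Pre_def)
   apply (simp add: bnd_updB del: bnd_upd)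
  apply (simp add: Pre_def )
  apply (rule reach_0')
   apply (simp add: bnd_updB del: bnd_upd)
  apply simp
  apply (insert tab2)
  apply (simp add: Inv2_def bnd_updB del: bnd_upd)
  done
qed


lemma cnt_skip: "\<not> (\<exists>k\<in>{1..m}. qf k = x) \<Longrightarrow> cnt (x - 1) = cnt x"
proof -
  assume "\<not> (\<exists>k\<in>{1..m}. qf k = x)"
  then have "{k\<in>{1..m}. qf k \<le> x - 1} = {k\<in>{1..m}. qf k \<le> x}" by force
  then show ?thesis unfolding cnt_def by simp
qed

lemma V_step: "V (Suc j) x = (if x = int j - 1 then int (cnt x) else V j x)"
  unfolding V_def by auto

lemma loop2_body:
  assumes inv: "Inv2 j M" and jm: "j \<le> m"
  shows "\<exists>n M'. reach Pre B (26, M) n (26, M') \<and> n \<le> 9 \<and> Inv2 (Suc j) M'"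
proof -
  have j2: "2 \<le> j" and bM: "bnd B M" and r: "M 1 = int m" "M 2 = lg 1" "M 3 = w" "M 4 = 1" "M 5 = int j" "M 8 = 0" "M 9 = 101"
    "M 10 = 100" "\<forall>a<0. M a = input_mem m b a" and tab: "\<forall>a. 100 \<le> a \<longrightarrow> a \<le> 100 + int m \<longrightarrow> M a = V j (a - 101)"
    using inv unfolding Inv2_def by auto
  have jm': "int j \<le> int m" "2 \<le> int j" using jm j2 by auto
  have v2: "M (99 + int j) = int (cnt (int j - 2))" using tab[rule_format, of "99 + int j"] jm j2 unfolding V_def by simp
  have cb: "int (cnt (int j - 1)) \<le> int m" "int (cnt (int j - 2)) \<le> int m" using cnt_b by auto
  show ?thesis
  proof (cases "\<exists>k\<in>{1..m}. qf k = int j - 1")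
    case True
    have v1: "M (int j + 100) = int (cnt (int j - 1))" using tab[rule_format, of "int j + 100"] jm j2 T1_fin True unfolding V_def by simp
    have c1: "cnt (int j - 1) \<noteq> 0" "\<not> int (cnt (int j - 1)) \<le> 0" using cnt_pos[of "int j - 1"] j2 by simp_all
    show ?thesis
    apply (insert VF bM r jm' v1 c1 cb)
    apply (rule exI, rule exI, rule conjI)
  apply (rule reach_stepI)
     apply (simp add: Pre_def)
    apply (simp add: Pre_def)
   apply (simp add: bnd_updB del: bnd_upd)
  apply (simp add: Pre_def )
  apply (rule reach_stepI)
     apply (simp add: Pre_def)
    apply (simp add: Pre_def)
   apply (simp add: bnd_updB del: bnd_upd)
  apply (simp add: Pre_def )
  apply (rule reach_stepI)
     apply (simp add: Pre_def)
    apply (simp add: Pre_def)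
   apply (simp add: bnd_updB del: bnd_upd)
  apply (simp add: Pre_def )
  apply (rule reach_stepI)
     apply (simp add: Pre_def)
    apply (simp add: Pre_def)
   apply (simp add: bnd_updB del: bnd_upd)
  apply (simp add: Pre_def )
  apply (rule reach_stepI)
     apply (simp add: Pre_def)
    apply (simp add: Pre_def)
   apply (simp add: bnd_updB del: bnd_upd)
  apply (simp add: Pre_def )
  apply (rule reach_stepI)
     apply (simp add: Pre_def)
    apply (simp add: Pre_def)
   apply (simp add: bnd_updB del: bnd_upd)
  apply (simp add: Pre_def )
  apply (rule reach_stepI)
     apply (simp add: Pre_def)
    apply (simp add: Pre_def)
   apply (simp add: bnd_updB del: bnd_upd)
  apply (simp add: Pre_def )
  apply (rule reach_0')
   apply (simp add: bnd_updB del: bnd_upd)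
  apply simp
    apply (insert tab j2 jm)
    apply (simp add: Inv2_def bnd_updB V_step del: bnd_upd)
    done
  next
    case False
    have v1: "M (int j + 100) = 0" using tab[rule_format, of "int j + 100"] jm j2 T1_fin False unfolding V_def by simp
    have cs: "cnt (int j - 2) = cnt (int j - 1)" using cnt_skip[OF False] by simp
    show ?thesis
    apply (insert VF bM r jm' v1 v2 cb)
    apply (rule exI, rule exI, rule conjI)
  apply (rule reach_stepI)
     apply (simp add: Pre_def)
    apply (simp add: Pre_def)
   apply (simp add: bnd_updB del: bnd_upd)
  apply (simp add: Pre_def )
  apply (rule reach_stepI)
     apply (simp add: Pre_def)
    apply (simp add: Pre_def)
   apply (simp add: bnd_updB del: bnd_upd)
  apply (simp add: Pre_def )
  apply (rule reach_stepI)
     apply (simp add: Pre_def)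
    apply (simp add: Pre_def)
   apply (simp add: bnd_updB del: bnd_upd)
  apply (simp add: Pre_def )
  apply (rule reach_stepI)
     apply (simp add: Pre_def)
    apply (simp add: Pre_def)
   apply (simp add: bnd_updB del: bnd_upd)
  apply (simp add: Pre_def )
  apply (rule reach_stepI)
     apply (simp add: Pre_def)
    apply (simp add: Pre_def)
   apply (simp add: bnd_updB del: bnd_upd)
  apply (simp add: Pre_def )
  apply (rule reach_stepI)
     apply (simp add: Pre_def)
    apply (simp add: Pre_def)
   apply (simp add: bnd_updB del: bnd_upd)
  apply (simp add: Pre_def )
  apply (rule reach_stepI)
     apply (simp add: Pre_def)
    apply (simp add: Pre_def)
   apply (simp add: bnd_updB del: bnd_upd)
  apply (simp add: Pre_def )
  apply (rule reach_stepI)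
     apply (simp add: Pre_def)
    apply (simp add: Pre_def)
   apply (simp add: bnd_updB del: bnd_upd)
  apply (simp add: Pre_def )
  apply (rule reach_stepI)
     apply (simp add: Pre_def)
    apply (simp add: Pre_def)
   apply (simp add: bnd_updB del: bnd_upd)
  apply (simp add: Pre_def )
  apply (rule reach_0')
   apply (simp add: bnd_updB del: bnd_upd)
  apply simp
    apply (insert tab j2 jm cs)
    apply (simp add: Inv2_def bnd_updB V_step del: bnd_upd)
    done
  qed
qed

end

context S begin
definition PostF where "PostF M \<longleftrightarrow> M 1 = int m \<and> M 2 = lg 1 \<and> M 3 = w \<and> M 4 = 1 \<and> M 8 = 0 \<and> M 9 = 101 \<and> M 10 = 100
  \<and> (\<forall>a<0. M a = input_mem m b a) \<and> (\<forall>a. 100 \<le> a \<longrightarrow> a \<le> 100 + int m \<longrightarrow> M a = int (cnt (a - 101)))"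
end

context SB begin

lemma loop2:
  shows "Inv2 j M \<Longrightarrow> \<exists>n M'. reach Pre B (26, M) n (26, M') \<and> n \<le> 9 * (m + 1 - j) \<and> Inv2 (m + 1) M'"
proof (induction "m + 1 - j" arbitrary: j M)
  case 0
  then have "j = m + 1" "bnd B M" unfolding Inv2_def by auto
  then show ?case using 0 by (intro exI[of _ 0] exI[of _ M]) (auto intro: reach_0')
next
  case (Suc k)
  then have jm: "j \<le> m" unfolding Inv2_def by auto
  obtain n1 M1 where 1: "reach Pre B (26, M) n1 (26, M1)" "n1 \<le> 9" "Inv2 (Suc j) M1"
    using loop2_body[OF Suc.prems jm] by blast
  have "k = m + 1 - Suc j" using Suc.hyps by simp
  from Suc.hyps(1)[OF this 1(3)] obtain n2 M2 where
    2: "reach Pre B (26, M1) n2 (26, M2)" "n2 \<le> 9 * (m + 1 - Suc j)" "Inv2 (m + 1) M2" by blast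
  have "n1 + n2 \<le> 9 * (m + 1 - j)" using 1(2) 2(2) jm by simp
  then show ?case using reach_trans[OF 1(1) 2(1)] 2(3) by blast
qed

lemma loop2_exit:
  assumes inv: "Inv2 (Suc m) M"
  shows "\<exists>n M'. reach Pre B (26, M) n (37, M') \<and> n \<le> 2 \<and> bnd B M' \<and> PostF M'"
proof -
  have bM: "bnd B M" and r: "M 1 = int m" "M 2 = lg 1" "M 3 = w" "M 4 = 1" "M 5 = int (Suc m)" "M 8 = 0" "M 9 = 101"
    "M 10 = 100" "\<forall>a<0. M a = input_mem m b a" and tab: "\<forall>a. 100 \<le> a \<longrightarrow> a \<le> 100 + int m \<longrightarrow> M a = V (Suc m) (a - 101)"
    using inv unfolding Inv2_def by auto
  have tab2: "\<forall>a. 100 \<le> a \<longrightarrow> a \<le> 100 + int m \<longrightarrow> M a = int (cnt (a - 101))"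
    using tab unfolding V_def by auto
  have "reach Pre B (26, M) (Suc (Suc 0)) (37, M)"
    apply (insert VF bM r)
    apply (rule reach_stepI)
       apply (simp add: Pre_def)
      apply (simp add: Pre_def)
     apply (simp add: bnd_updB del: bnd_upd)
    apply (simp add: Pre_def )
    apply (rule reach_stepI)
       apply (simp add: Pre_def)
      apply (simp add: Pre_def)
     apply (simp add: bnd_updB del: bnd_upd)
    apply (simp add: Pre_def )
    apply (rule reach_0')
     apply (simp add: bnd_updB del: bnd_upd)
    apply simp
    done
  then show ?thesis using bM r tab2 unfolding PostF_def by (intro exI[of _ "Suc (Suc 0)"] exI[of _ M]) simp
qed

lemma pre_total:
  "\<exists>n M1. reach Pre B (0, input_mem m b) n (37, M1) \<and> n \<le> 40 * m \<and> bnd B M1 \<and> PostF M1"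
proof -
  obtain n1 M1 where 1: "reach Pre B (0, input_mem m b) n1 (14, M1)" "n1 \<le> 14" "Inv1 1 M1" using pre_init by blast
  obtain n2 M2 where 2: "reach Pre B (14, M1) n2 (14, M2)" "n2 \<le> 10 * (m + 1 - 1)" "Inv1 (m + 1) M2" using loop1[OF 1(3)] by blast
  have i2: "Inv1 (Suc m) M2" using 2(3) by simp
  obtain n3 M3 where 3: "reach Pre B (14, M2) n3 (26, M3)" "n3 \<le> 3" "Inv2 2 M3" using loop1_exit[OF i2] by blast
  obtain n4 M4 where 4: "reach Pre B (26, M3) n4 (26, M4)" "n4 \<le> 9 * (m + 1 - 2)" "Inv2 (m + 1) M4" using loop2[OF 3(3)] by blast
  have i4: "Inv2 (Suc m) M4" using 4(3) by simp
  obtain n5 M5 where 5: "reach Pre B (26, M4) n5 (37, M5)" "n5 \<le> 2" "bnd B M5" "PostF M5" using loop2_exit[OF i4] by blast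
  have "reach Pre B (0, input_mem m b) (n1 + n2 + n3 + n4 + n5) (37, M5)"
    using reach_trans[OF reach_trans[OF reach_trans[OF reach_trans[OF 1(1) 2(1)] 3(1)] 4(1)] 5(1)] .
  moreover have "n1 + n2 + n3 + n4 + n5 \<le> 40 * m" using 1(2) 2(2) 3(2) 4(2) 5(2) m1 by linarith
  ultimately show ?thesis using 5 by blast
qed

lemma pre_runs: "\<exists>n M1. runs Pre (input_mem m b) n B M1 \<and> n \<le> 40 * m \<and> bnd B M1 \<and> PostF M1"
proof -
  obtain n M1 where "reach Pre B (0, input_mem m b) n (37, M1)" "n \<le> 40 * m" "bnd B M1" "PostF M1"
    using pre_total by blast
  moreover have "length Pre \<le> 37" by (simp add: Pre_def)
  ultimately show ?thesis using runsI[of Pre B "input_mem m b" n 37 M1 n] by blast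
qed

end

definition Qry :: prog where "Qry = [
 Sub 6 8 4, Load 7 6, Jle 7 0 5, Const 0 0, Jle 8 8 30,
 Sub 6 8 1, Load 7 6, Jle 7 0 29, Log2 7 0, Sub 7 7 2, Div 7 7 3, Add 6 7 10, Load 5 6,
 Add 6 7 9, Load 11 6, Const 12 2,
 Jle 11 5 27, Add 6 5 11, Add 6 6 4, Div 6 6 12, Sub 7 8 6, Load 7 7, Jle 7 0 25,
 Sub 11 6 4, Jle 8 8 16, Add 5 6 8, Jle 8 8 16, Add 0 5 8, Jle 8 8 30, Add 0 1 8]"

lemma len_Qry: "length Qry = 30" by (simp add: Qry_def)

context S begin
lemma cnt_mono: "x \<le> y \<Longrightarrow> cnt x \<le> cnt y"
  unfolding cnt_def by (rule card_mono) auto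
end

locale SQ = SB +
  fixes t :: int and M1 :: mem
  assumes tB: "real_of_int \<bar>t\<bar> \<le> B" and bM1: "bnd B M1" and post: "PostF M1"
begin

lemma r1: "M1 1 = int m" "M1 2 = lg 1" "M1 3 = w" "M1 4 = 1" "M1 8 = 0" "M1 9 = 101" "M1 10 = 100"
  "\<forall>a<0. M1 a = input_mem m b a"
  using post unfolding PostF_def by auto

lemma tab1: "100 \<le> a \<Longrightarrow> a \<le> 100 + int m \<Longrightarrow> M1 a = int (cnt (a - 101))"
  using post unfolding PostF_def by auto

lemma bM0: "bnd B (M1(0 := t))" using bM1 tB by simp

lemma qA:
  assumes "t < b 1"
  shows "\<exists>n M'. reach Qry B (0, M1(0 := t)) n (30, M') \<and> n \<le> 5 \<and> M' 0 = int (rank m b t)"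
proof -
  have rk: "rank m b t = 0"
    using assms bmono[of 1] by (intro rank_char) force+
  show ?thesis
  apply (insert VF r1 bM0 bM1 assms rk)
  apply (rule exI, rule exI, rule conjI)
  apply (rule reach_stepI)
     apply (simp add: Qry_def)
    apply (simp add: Qry_def)
   apply (simp add: bnd_updB del: bnd_upd)
  apply (simp add: Qry_def im_1 im_m)
  apply (rule reach_stepI)
     apply (simp add: Qry_def)
    apply (simp add: Qry_def)
   apply (simp add: bnd_updB del: bnd_upd)
  apply (simp add: Qry_def im_1 im_m)
  apply (rule reach_stepI)
     apply (simp add: Qry_def)
    apply (simp add: Qry_def)
   apply (simp add: bnd_updB del: bnd_upd)
  apply (simp add: Qry_def im_1 im_m)
  apply (rule reach_stepI)
     apply (simp add: Qry_def)
    apply (simp add: Qry_def)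
   apply (simp add: bnd_updB del: bnd_upd)
  apply (simp add: Qry_def im_1 im_m)
  apply (rule reach_stepI)
     apply (simp add: Qry_def)
    apply (simp add: Qry_def)
   apply (simp add: bnd_updB del: bnd_upd)
  apply (simp add: Qry_def im_1 im_m)
  apply (rule reach_0')
   apply (simp add: bnd_updB del: bnd_upd)
  apply simp
  apply simp
  done
qed

lemma qB:
  assumes "b 1 \<le> t" "b m \<le> t"
  shows "\<exists>n M'. reach Qry B (0, M1(0 := t)) n (30, M') \<and> n \<le> 7 \<and> M' 0 = int (rank m b t)"
proof -
  have rk: "rank m b t = m"
    using assms bmono[of _ m] by (intro rank_char) force+
  show ?thesis
  apply (insert VF r1 bM0 bM1 assms rk)
  apply (rule exI, rule exI, rule conjI)
  apply (rule reach_stepI)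
     apply (simp add: Qry_def)
    apply (simp add: Qry_def)
   apply (simp add: bnd_updB del: bnd_upd)
  apply (simp add: Qry_def im_1 im_m)
  apply (rule reach_stepI)
     apply (simp add: Qry_def)
    apply (simp add: Qry_def)
   apply (simp add: bnd_updB del: bnd_upd)
  apply (simp add: Qry_def im_1 im_m)
  apply (rule reach_stepI)
     apply (simp add: Qry_def)
    apply (simp add: Qry_def)
   apply (simp add: bnd_updB del: bnd_upd)
  apply (simp add: Qry_def im_1 im_m)
  apply (rule reach_stepI)
     apply (simp add: Qry_def)
    apply (simp add: Qry_def)
   apply (simp add: bnd_updB del: bnd_upd)
  apply (simp add: Qry_def im_1 im_m)
  apply (rule reach_stepI)
     apply (simp add: Qry_def)
    apply (simp add: Qry_def)
   apply (simp add: bnd_updB del: bnd_upd)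
  apply (simp add: Qry_def im_1 im_m)
  apply (rule reach_stepI)
     apply (simp add: Qry_def)
    apply (simp add: Qry_def)
   apply (simp add: bnd_updB del: bnd_upd)
  apply (simp add: Qry_def im_1 im_m)
  apply (rule reach_stepI)
     apply (simp add: Qry_def)
    apply (simp add: Qry_def)
   apply (simp add: bnd_updB del: bnd_upd)
  apply (simp add: Qry_def im_1 im_m)
  apply (rule reach_0')
   apply (simp add: bnd_updB del: bnd_upd)
  apply simp
  apply simp
  done
qed


definition InvQ where "InvQ lo hi M \<longleftrightarrow> lo \<le> hi \<and> hi \<le> m \<and> bnd B M \<and> M 0 = t \<and> M 1 = int m \<and> M 4 = 1 \<and> M 8 = 0
  \<and> M 12 = 2 \<and> M 5 = int lo \<and> M 11 = int hi \<and> (\<forall>a<0. M a = input_mem m b a)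
  \<and> (\<forall>k. 1 \<le> k \<longrightarrow> k \<le> m \<longrightarrow> k \<le> lo \<longrightarrow> b k \<le> t) \<and> (\<forall>k. 1 \<le> k \<longrightarrow> k \<le> m \<longrightarrow> hi < k \<longrightarrow> t < b k)"

lemma qC_setup:
  assumes t1: "b 1 \<le> t" and tm: "t < b m"
  shows "\<exists>n M. reach Qry B (0, M1(0 := t)) n (16, M) \<and> n \<le> 14 \<and>
    InvQ (cnt ((ilog2 t - lg 1) div w - 1)) (cnt ((ilog2 t - lg 1) div w)) M"
proof -
  define qq where "qq = (ilog2 t - lg 1) div w"
  have qqb: "0 \<le> qq" "qq < int m" using query_q[OF t1 tm] unfolding qq_def by auto
  have lt: "lg 1 \<le> ilog2 t" "ilog2 t \<le> lg m" unfolding lg_def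
    using il_mono[of "b 1" t] il_mono[of t "b m"] bpos[of 1] bpos[of m] m1 t1 tm by auto
  have lt2: "0 \<le> ilog2 t - lg 1" "ilog2 t < Xp" using lt lgm_b by auto
  have tq: "M1 (qq + 100) = int (cnt (qq - 1))" "M1 (qq + 101) = int (cnt qq)"
    using tab1[of "qq + 100"] tab1[of "qq + 101"] qqb by auto
  have cb: "int (cnt (qq - 1)) \<le> int m" "int (cnt qq) \<le> int m" using cnt_b by auto
  have qd: "(ilog2 t - lg 1) div w = qq" unfolding qq_def ..
  have ex: "\<exists>n M. reach Qry B (0, M1(0 := t)) n (16, M) \<and> n \<le> 14 \<and>
      M = M1(0 := t, 7 := qq, 5 := int (cnt (qq - 1)), 6 := qq + 101, 11 := int (cnt qq), 12 := 2)"
  apply (insert VF r1 bM0 bM1 t1 tm qqb lt2 tq cb qd)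
  apply (rule exI, rule exI, rule conjI)
  apply (rule reach_stepI)
     apply (simp add: Qry_def)
    apply (simp add: Qry_def)
   apply (simp add: bnd_updB del: bnd_upd)
  apply (simp add: Qry_def im_1 im_m)
  apply (rule reach_stepI)
     apply (simp add: Qry_def)
    apply (simp add: Qry_def)
   apply (simp add: bnd_updB del: bnd_upd)
  apply (simp add: Qry_def im_1 im_m)
  apply (rule reach_stepI)
     apply (simp add: Qry_def)
    apply (simp add: Qry_def)
   apply (simp add: bnd_updB del: bnd_upd)
  apply (simp add: Qry_def im_1 im_m)
  apply (rule reach_stepI)
     apply (simp add: Qry_def)
    apply (simp add: Qry_def)
   apply (simp add: bnd_updB del: bnd_upd)
  apply (simp add: Qry_def im_1 im_m)
  apply (rule reach_stepI)
     apply (simp add: Qry_def)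
    apply (simp add: Qry_def)
   apply (simp add: bnd_updB del: bnd_upd)
  apply (simp add: Qry_def im_1 im_m)
  apply (rule reach_stepI)
     apply (simp add: Qry_def)
    apply (simp add: Qry_def)
   apply (simp add: bnd_updB del: bnd_upd)
  apply (simp add: Qry_def im_1 im_m)
  apply (rule reach_stepI)
     apply (simp add: Qry_def)
    apply (simp add: Qry_def)
   apply (simp add: bnd_updB del: bnd_upd)
  apply (simp add: Qry_def im_1 im_m)
  apply (rule reach_stepI)
     apply (simp add: Qry_def)
    apply (simp add: Qry_def)
   apply (simp add: bnd_updB del: bnd_upd)
  apply (simp add: Qry_def im_1 im_m)
  apply (rule reach_stepI)
     apply (simp add: Qry_def)
    apply (simp add: Qry_def)
   apply (simp add: bnd_updB del: bnd_upd)
  apply (simp add: Qry_def im_1 im_m)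
  apply (rule reach_stepI)
     apply (simp add: Qry_def)
    apply (simp add: Qry_def)
   apply (simp add: bnd_updB del: bnd_upd)
  apply (simp add: Qry_def im_1 im_m)
  apply (rule reach_stepI)
     apply (simp add: Qry_def)
    apply (simp add: Qry_def)
   apply (simp add: bnd_updB del: bnd_upd)
  apply (simp add: Qry_def im_1 im_m)
  apply (rule reach_stepI)
     apply (simp add: Qry_def)
    apply (simp add: Qry_def)
   apply (simp add: bnd_updB del: bnd_upd)
  apply (simp add: Qry_def im_1 im_m)
  apply (rule reach_stepI)
     apply (simp add: Qry_def)
    apply (simp add: Qry_def)
   apply (simp add: bnd_updB del: bnd_upd)
  apply (simp add: Qry_def im_1 im_m)
  apply (rule reach_stepI)
     apply (simp add: Qry_def)
    apply (simp add: Qry_def)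
   apply (simp add: bnd_updB del: bnd_upd)
  apply (simp add: Qry_def im_1 im_m)
  apply (rule reach_0')
   apply (simp add: bnd_updB del: bnd_upd)
  apply simp
  apply simp
  done
  then obtain n M where nM: "reach Qry B (0, M1(0 := t)) n (16, M)" "n \<le> 14"
      "M = M1(0 := t, 7 := qq, 5 := int (cnt (qq - 1)), 6 := qq + 101, 11 := int (cnt qq), 12 := 2)" by blast
  have "InvQ (cnt (qq - 1)) (cnt qq) M"
    unfolding InvQ_def
  proof (intro conjI allI impI)
    show "cnt (qq - 1) \<le> cnt qq" by (rule cnt_mono) simp
    show "cnt qq \<le> m" by (rule cnt_le)
    show "bnd B M" using reach_bnd'[OF nM(1)] by simp
    fix k assume k: "1 \<le> k" "k \<le> m"
    { assume "k \<le> cnt (qq - 1)" then show "b k \<le> t" using query_lo[OF t1 k] unfolding qq_def by simp }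
    { assume "cnt qq < k" then show "t < b k" using query_hi[OF t1 k] unfolding qq_def by simp }
  qed (use nM(3) r1 in auto)
  then show ?thesis using nM unfolding qq_def by blast
qed

end

context SQ begin

lemma qbody:
  assumes inv: "InvQ lo hi M" and lh: "lo < hi"
  shows "\<exists>n M' lo' hi'. reach Qry B (16, M) n (16, M') \<and> n \<le> 9 \<and> InvQ lo' hi' M' \<and> hi' - lo' \<le> (hi - lo) div 2"
proof -
  have hm: "hi \<le> m" and bM: "bnd B M" and r: "M 0 = t" "M 1 = int m" "M 4 = 1" "M 8 = 0" "M 12 = 2" "M 5 = int lo" "M 11 = int hi"
    and neg: "\<forall>a<0. M a = input_mem m b a" and plo: "\<forall>k. 1 \<le> k \<longrightarrow> k \<le> m \<longrightarrow> k \<le> lo \<longrightarrow> b k \<le> t"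
    and phi: "\<forall>k. 1 \<le> k \<longrightarrow> k \<le> m \<longrightarrow> hi < k \<longrightarrow> t < b k"
    using inv unfolding InvQ_def by auto
  define mid where "mid = (lo + hi + 1) div 2"
  have mid: "1 \<le> mid" "mid \<le> hi" "lo < mid" using lh unfolding mid_def by auto
  have md: "(int lo + int hi + 1) div 2 = int mid" unfolding mid_def by (simp add: zdiv_int)
  have bmid: "M (- int mid) = b mid" "b mid \<le> Xp" "0 < b mid" using neg im_k[of mid] bXp[of mid] bpos[of mid] mid hm by auto
  have s1: "hi - mid \<le> (hi - lo) div 2" "mid - 1 - lo \<le> (hi - lo) div 2" unfolding mid_def using lh by presburger+
  have bnds: "int lo + int hi + 1 \<le> 2 * int m + 1" "int mid \<le> int m" using lh hm mid by auto
  show ?thesis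
  proof (cases "b mid \<le> t")
    case True
    have plo': "\<forall>k. 1 \<le> k \<longrightarrow> k \<le> m \<longrightarrow> k \<le> mid \<longrightarrow> b k \<le> t"
      using True bmono[of _ mid] mid hm by force
    show ?thesis
    apply (insert VF bM r md bmid bnds True plo' phi neg s1 mid hm lh)
    apply (rule exI, rule exI, rule exI[of _ mid], rule exI[of _ hi], rule conjI)
  apply (rule reach_stepI)
     apply (simp add: Qry_def)
    apply (simp add: Qry_def)
   apply (simp add: bnd_updB del: bnd_upd)
  apply (simp add: Qry_def )
  apply (rule reach_stepI)
     apply (simp add: Qry_def)
    apply (simp add: Qry_def)
   apply (simp add: bnd_updB del: bnd_upd)
  apply (simp add: Qry_def )
  apply (rule reach_stepI)
     apply (simp add: Qry_def)
    apply (simp add: Qry_def)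
   apply (simp add: bnd_updB del: bnd_upd)
  apply (simp add: Qry_def )
  apply (rule reach_stepI)
     apply (simp add: Qry_def)
    apply (simp add: Qry_def)
   apply (simp add: bnd_updB del: bnd_upd)
  apply (simp add: Qry_def )
  apply (rule reach_stepI)
     apply (simp add: Qry_def)
    apply (simp add: Qry_def)
   apply (simp add: bnd_updB del: bnd_upd)
  apply (simp add: Qry_def )
  apply (rule reach_stepI)
     apply (simp add: Qry_def)
    apply (simp add: Qry_def)
   apply (simp add: bnd_updB del: bnd_upd)
  apply (simp add: Qry_def )
  apply (rule reach_stepI)
     apply (simp add: Qry_def)
    apply (simp add: Qry_def)
   apply (simp add: bnd_updB del: bnd_upd)
  apply (simp add: Qry_def )
  apply (rule reach_stepI)
     apply (simp add: Qry_def)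
    apply (simp add: Qry_def)
   apply (simp add: bnd_updB del: bnd_upd)
  apply (simp add: Qry_def )
  apply (rule reach_stepI)
     apply (simp add: Qry_def)
    apply (simp add: Qry_def)
   apply (simp add: bnd_updB del: bnd_upd)
  apply (simp add: Qry_def )
  apply (rule reach_0')
   apply (simp add: bnd_updB del: bnd_upd)
  apply simp
    apply (simp add: InvQ_def bnd_updB del: bnd_upd)
    done
  next
    case False
    have phi': "\<forall>k. 1 \<le> k \<longrightarrow> k \<le> m \<longrightarrow> mid - 1 < k \<longrightarrow> t < b k"
    proof (intro allI impI)
      fix k assume k: "1 \<le> k" "k \<le> m" "mid - 1 < k"
      then have "mid \<le> k" by simp
      then have "b mid \<le> b k" using bmono[of mid k] mid k by simp
      then show "t < b k" using False by simp
    qed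
    have im1: "int (mid - 1) = int mid - 1" "lo \<le> mid - 1" "mid - 1 \<le> m" using mid hm by auto
    show ?thesis
    apply (insert VF bM r md bmid bnds False plo phi' neg s1 mid hm lh im1)
    apply (rule exI, rule exI, rule exI[of _ lo], rule exI[of _ "mid - 1"], rule conjI)
  apply (rule reach_stepI)
     apply (simp add: Qry_def)
    apply (simp add: Qry_def)
   apply (simp add: bnd_updB del: bnd_upd)
  apply (simp add: Qry_def )
  apply (rule reach_stepI)
     apply (simp add: Qry_def)
    apply (simp add: Qry_def)
   apply (simp add: bnd_updB del: bnd_upd)
  apply (simp add: Qry_def )
  apply (rule reach_stepI)
     apply (simp add: Qry_def)
    apply (simp add: Qry_def)
   apply (simp add: bnd_updB del: bnd_upd)
  apply (simp add: Qry_def )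
  apply (rule reach_stepI)
     apply (simp add: Qry_def)
    apply (simp add: Qry_def)
   apply (simp add: bnd_updB del: bnd_upd)
  apply (simp add: Qry_def )
  apply (rule reach_stepI)
     apply (simp add: Qry_def)
    apply (simp add: Qry_def)
   apply (simp add: bnd_updB del: bnd_upd)
  apply (simp add: Qry_def )
  apply (rule reach_stepI)
     apply (simp add: Qry_def)
    apply (simp add: Qry_def)
   apply (simp add: bnd_updB del: bnd_upd)
  apply (simp add: Qry_def )
  apply (rule reach_stepI)
     apply (simp add: Qry_def)
    apply (simp add: Qry_def)
   apply (simp add: bnd_updB del: bnd_upd)
  apply (simp add: Qry_def )
  apply (rule reach_stepI)
     apply (simp add: Qry_def)
    apply (simp add: Qry_def)
   apply (simp add: bnd_updB del: bnd_upd)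
  apply (simp add: Qry_def )
  apply (rule reach_stepI)
     apply (simp add: Qry_def)
    apply (simp add: Qry_def)
   apply (simp add: bnd_updB del: bnd_upd)
  apply (simp add: Qry_def )
  apply (rule reach_0')
   apply (simp add: bnd_updB del: bnd_upd)
  apply simp
    apply (simp add: InvQ_def bnd_updB del: bnd_upd)
    done
  qed
qed

end

definition gq :: "nat \<Rightarrow> real" where "gq s = (if s = 0 then 0 else 9 * (1 + log 2 (real s)))"

lemma gq_nonneg: "0 \<le> gq s" unfolding gq_def by simp

lemma gq_step: assumes "1 \<le> s" "s' \<le> s div 2" shows "9 + gq s' \<le> gq s"
proof (cases "s' = 0")
  case True
  then show ?thesis using assms unfolding gq_def by simp
next
  case False
  have "real (2 * s') \<le> real s" using assms by linarith
  then have "log 2 (real (2 * s')) \<le> log 2 (real s)" using False by simp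
  moreover have "log 2 (real (2 * s')) = 1 + log 2 (real s')" using False by (simp add: log_mult)
  ultimately have h: "1 + log 2 (real s') \<le> log 2 (real s)" by linarith
  have "s \<noteq> 0" using assms by simp
  then have "gq s = 9 * (1 + log 2 (real s))" "gq s' = 9 * (1 + log 2 (real s'))" using False unfolding gq_def by auto
  then show ?thesis using h by (simp add: distrib_left)
qed

lemma gq_le: assumes "real s \<le> x" "1 \<le> x" shows "gq s \<le> 9 * (1 + log 2 x)"
proof (cases "s = 0")
  case True then show ?thesis using assms unfolding gq_def by simp
next
  case False
  then have "log 2 (real s) \<le> log 2 x" using assms by simp
  then show ?thesis using False unfolding gq_def by simp
qed

context SQ begin

lemma qexit:
  assumes inv: "InvQ lo hi M" and lh: "\<not> lo < hi"
  shows "\<exists>n M'. reach Qry B (16, M) n (30, M') \<and> n \<le> 3 \<and> M' 0 = int (rank m b t)"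
proof -
  have hm: "hi \<le> m" and bM: "bnd B M" and r: "M 0 = t" "M 1 = int m" "M 4 = 1" "M 8 = 0" "M 12 = 2" "M 5 = int lo" "M 11 = int hi"
    and plo: "\<forall>k. 1 \<le> k \<longrightarrow> k \<le> m \<longrightarrow> k \<le> lo \<longrightarrow> b k \<le> t"
    and phi: "\<forall>k. 1 \<le> k \<longrightarrow> k \<le> m \<longrightarrow> hi < k \<longrightarrow> t < b k" and lh2: "lo \<le> hi"
    using inv unfolding InvQ_def by auto
  have eq: "lo = hi" using lh lh2 by simp
  have rk: "rank m b t = lo"
    using plo phi hm eq by (intro rank_char) force+
  have lm: "int lo \<le> int m" using hm eq by simp
  show ?thesis
  apply (insert VF bM r rk eq lm)
  apply (rule exI, rule exI, rule conjI)
  apply (rule reach_stepI)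
     apply (simp add: Qry_def)
    apply (simp add: Qry_def)
   apply (simp add: bnd_updB del: bnd_upd)
  apply (simp add: Qry_def )
  apply (rule reach_stepI)
     apply (simp add: Qry_def)
    apply (simp add: Qry_def)
   apply (simp add: bnd_updB del: bnd_upd)
  apply (simp add: Qry_def )
  apply (rule reach_stepI)
     apply (simp add: Qry_def)
    apply (simp add: Qry_def)
   apply (simp add: bnd_updB del: bnd_upd)
  apply (simp add: Qry_def )
  apply (rule reach_0')
   apply (simp add: bnd_updB del: bnd_upd)
  apply simp
  apply simp
  done
qed

lemma qloop:
  shows "InvQ lo hi M \<Longrightarrow> \<exists>n M'. reach Qry B (16, M) n (30, M') \<and> real n \<le> gq (hi - lo) + 3 \<and> M' 0 = int (rank m b t)"
proof (induction "hi - lo" arbitrary: lo hi M rule: less_induct)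
  case less
  show ?case
  proof (cases "lo < hi")
    case True
    obtain n1 M' lo' hi' where 1: "reach Qry B (16, M) n1 (16, M')" "n1 \<le> 9" "InvQ lo' hi' M'" "hi' - lo' \<le> (hi - lo) div 2"
      using qbody[OF less.prems True] by blast
    have "hi' - lo' < hi - lo" using 1(4) True by linarith
    from less.hyps[OF this 1(3)] obtain n2 M2 where
      2: "reach Qry B (16, M') n2 (30, M2)" "real n2 \<le> gq (hi' - lo') + 3" "M2 0 = int (rank m b t)" by blast
    have "9 + gq (hi' - lo') \<le> gq (hi - lo)" using gq_step[OF _ 1(4)] True by simp
    then have "real (n1 + n2) \<le> gq (hi - lo) + 3" using 1(2) 2(2) by simp
    then show ?thesis using reach_trans[OF 1(1) 2(1)] 2(3) by blast
  next
    case False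
    obtain n M' where "reach Qry B (16, M) n (30, M')" "n \<le> 3" "M' 0 = int (rank m b t)"
      using qexit[OF less.prems False] by blast
    moreover have "real n \<le> gq (hi - lo) + 3" using gq_nonneg[of "hi - lo"] \<open>n \<le> 3\<close> by simp
    ultimately show ?thesis by blast
  qed
qed

lemma query_total:
  "\<exists>n M'. reach Qry B (0, M1(0 := t)) n (30, M') \<and> real n \<le> 50 * (1 + log 2 (log 2 D)) \<and> M' 0 = int (rank m b t)"
proof -
  have LL: "0 \<le> log 2 (log 2 D)" using logD by simp
  show ?thesis
  proof (cases "t < b 1")
    case True
    then obtain n M' where "reach Qry B (0, M1(0 := t)) n (30, M')" "n \<le> 5" "M' 0 = int (rank m b t)"
      using qA by blast
    moreover have "real n \<le> 50 * (1 + log 2 (log 2 D))" using \<open>n \<le> 5\<close> LL by simp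
    ultimately show ?thesis by blast
  next
    case F1: False
    show ?thesis
    proof (cases "b m \<le> t")
      case True
      then obtain n M' where "reach Qry B (0, M1(0 := t)) n (30, M')" "n \<le> 7" "M' 0 = int (rank m b t)"
        using qB F1 by force
      moreover have "real n \<le> 50 * (1 + log 2 (log 2 D))" using \<open>n \<le> 7\<close> LL by simp
      ultimately show ?thesis by blast
    next
      case False
      define qq where "qq = (ilog2 t - lg 1) div w"
      have t1: "b 1 \<le> t" "t < b m" using F1 False by auto
      obtain n1 M where 1: "reach Qry B (0, M1(0 := t)) n1 (16, M)" "n1 \<le> 14" "InvQ (cnt (qq - 1)) (cnt qq) M"
        using qC_setup[OF t1] unfolding qq_def by blast
      obtain n2 M' where 2: "reach Qry B (16, M) n2 (30, M')" "real n2 \<le> gq (cnt qq - cnt (qq - 1)) + 3" "M' 0 = int (rank m b t)"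
        using qloop[OF 1(3)] by blast
      have "int (cnt qq) - int (cnt (qq - 1)) \<le> w" using bucket[of qq] by simp
      moreover have "cnt (qq - 1) \<le> cnt qq" by (rule cnt_mono) simp
      ultimately have "real (cnt qq - cnt (qq - 1)) \<le> real_of_int w"
        by (metis of_int_le_iff of_int_of_nat_eq of_nat_diff)
      then have "real (cnt qq - cnt (qq - 1)) \<le> log 2 D + 2" using w_le by linarith
      then have g: "gq (cnt qq - cnt (qq - 1)) \<le> 9 * (1 + log 2 (log 2 D + 2))" using logD by (intro gq_le) auto
      have "log 2 (log 2 D + 2) \<le> log 2 (4 * log 2 D)" using logD by simp
      also have "\<dots> = log 2 4 + log 2 (log 2 D)" using logD by (simp add: log_mult)
      also have "log 2 (4::real) = 2" using log_pow_cancel[of "2::real" 2] by simp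
      finally have "real (n1 + n2) \<le> 50 * (1 + log 2 (log 2 D))" using g 1(2) 2(2) LL by simp
      then show ?thesis using reach_trans[OF 1(1) 2(1)] 2(3) by blast
    qed
  qed
qed

end

lemma bnd_mono: "bnd B M \<Longrightarrow> B \<le> B' \<Longrightarrow> bnd B' M"
  unfolding bnd_def by (meson order_trans)

lemma pow8_big: fixes X :: real assumes "2 \<le> X" shows "103 * X \<le> X ^ 8" "X \<le> X ^ 8"
proof -
  have "(2::real) ^ 7 \<le> X ^ 7" using assms by (intro power_mono) auto
  then have "128 \<le> X ^ 7" by simp
  then have "128 * X \<le> X ^ 7 * X" using assms by (intro mult_right_mono) auto
  moreover have "X ^ 7 * X = X ^ 8" by (simp add: power_Suc2[symmetric])
  ultimately show "103 * X \<le> X ^ 8" "X \<le> X ^ 8" using assms by linarith+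
qed

theorem mainTheorem11:
  "\<exists>(Pre::prog) (Qry::prog) (c1::real) (c2::real) (c::nat).
     \<forall>(D::real) (m::nat) (b::nat \<Rightarrow> int).
       D \<ge> 2 \<longrightarrow> m \<ge> 1 \<longrightarrow> (\<forall>i\<in>{1..m}. b i > 0) \<longrightarrow>
       (\<forall>i. 1 \<le> i \<and> i < m \<longrightarrow> b i < b (Suc i)) \<longrightarrow>
       (\<forall>i. 1 \<le> i \<and> i < m \<longrightarrow>
          2 \<le> real_of_int (b (Suc i)) / real_of_int (b i) \<and>
          real_of_int (b (Suc i)) / real_of_int (b i) \<le> D) \<longrightarrow>
       (\<exists>M1 k.
          real k \<le> c1 * real m \<and>
          runs Pre (input_mem m b) k (real_of_int (max 2 (max (int m) (b m))) ^ c) M1 \<and>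
          (\<forall>t::int. \<exists>k' M2.
             real k' \<le> c2 * (1 + log 2 (log 2 D)) \<and>
             runs Qry (M1(0 := t)) k'
               (real_of_int (max 2 (max (int m) (max (b m) \<bar>t\<bar>))) ^ c) M2 \<and>
             M2 0 = int (rank m b t)))"
proof (rule exI[of _ Pre], rule exI[of _ Qry], rule exI[of _ "40::real"], rule exI[of _ "50::real"], rule exI[of _ "8::nat"], intro allI impI)
  fix D :: real and m :: nat and b :: "nat \<Rightarrow> int"
  assume a1: "D \<ge> 2" and a2: "m \<ge> 1" and a3: "\<forall>i\<in>{1..m}. b i > 0"
    and a4: "\<forall>i. 1 \<le> i \<and> i < m \<longrightarrow> b i < b (Suc i)"
    and a5: "\<forall>i. 1 \<le> i \<and> i < m \<longrightarrow>
          2 \<le> real_of_int (b (Suc i)) / real_of_int (b i) \<and>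
          real_of_int (b (Suc i)) / real_of_int (b i) \<le> D"
  interpret S m b D using a1 a2 a3 a4 a5 by unfold_locales
  define Bp where "Bp = real_of_int (max 2 (max (int m) (b m))) ^ 8"
  have X2: "2 \<le> real_of_int Xp" unfolding Xp_def by simp
  have Bp: "103 * real_of_int Xp \<le> Bp" unfolding Bp_def using pow8_big[OF X2] unfolding Xp_def by simp
  interpret P: SB m b D Bp by unfold_locales (rule Bp)
  obtain n M1 where pr: "runs Pre (input_mem m b) n Bp M1" "n \<le> 40 * m" "bnd Bp M1" "PostF M1"
    using P.pre_runs by blast
  show "\<exists>M1 k. real k \<le> 40 * real m \<and>
          runs Pre (input_mem m b) k (real_of_int (max 2 (max (int m) (b m))) ^ 8) M1 \<and>
          (\<forall>t::int. \<exists>k' M2.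
             real k' \<le> 50 * (1 + log 2 (log 2 D)) \<and>
             runs Qry (M1(0 := t)) k'
               (real_of_int (max 2 (max (int m) (max (b m) \<bar>t\<bar>))) ^ 8) M2 \<and>
             M2 0 = int (rank m b t))"
  proof (rule exI[of _ M1], rule exI[of _ n], intro conjI allI)
    show "real n \<le> 40 * real m" using pr(2) by simp
    show "runs Pre (input_mem m b) n (real_of_int (max 2 (max (int m) (b m))) ^ 8) M1"
      using pr(1) unfolding Bp_def .
    fix t :: int
    define Xq where "Xq = real_of_int (max 2 (max (int m) (max (b m) \<bar>t\<bar>)))"
    define Bq where "Bq = Xq ^ 8"
    have Xq2: "2 \<le> Xq" unfolding Xq_def by simp
    have "max 2 (max (int m) (b m)) \<le> max 2 (max (int m) (max (b m) \<bar>t\<bar>))"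
      by (intro max.mono) auto
    then have XpXq: "real_of_int Xp \<le> Xq" unfolding Xq_def Xp_def by linarith
    have BpBq: "Bp \<le> Bq" unfolding Bp_def Bq_def using XpXq X2 unfolding Xp_def
      by (intro power_mono) auto
    have Bq: "103 * real_of_int Xp \<le> Bq" using pow8_big[OF Xq2] XpXq unfolding Bq_def by linarith
    have "real_of_int \<bar>t\<bar> \<le> Xq" unfolding Xq_def by simp
    then have tq: "real_of_int \<bar>t\<bar> \<le> Bq" using pow8_big(2)[OF Xq2] unfolding Bq_def by linarith
    interpret Q: SQ m b D Bq t M1
      by unfold_locales (use Bq tq bnd_mono[OF pr(3) BpBq] pr(4) in auto)
    obtain k M2 where q: "reach Qry Bq (0, M1(0 := t)) k (30, M2)" "real k \<le> 50 * (1 + log 2 (log 2 D))"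
      "M2 0 = int (rank m b t)" using Q.query_total by blast
    have "runs Qry (M1(0 := t)) k Bq M2" using runsI[OF q(1)] len_Qry by simp
    then show "\<exists>k' M2. real k' \<le> 50 * (1 + log 2 (log 2 D)) \<and>
             runs Qry (M1(0 := t)) k' (real_of_int (max 2 (max (int m) (max (b m) \<bar>t\<bar>))) ^ 8) M2 \<and>
             M2 0 = int (rank m b t)"
      using q unfolding Bq_def Xq_def by blast
  qed
qed

end
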